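(* Let $\mathbb{Z}$ be a finite-dimensional Euclidean space, $L>0$, $G:\mathbb{Z}\to\mathbb{Z}$ $\frac1L$-co-coercive with a zero $z^*$ ($G(z^* )=0$). Let $\epsilon\in(0,1]$ and $\gamma_k:=\epsilon/\sqrt{k+1}$ for $k\ge0$. Let $\{z^k\}$ be generated from $z^0\in\mathbb{Z}$ by: for $k\ge 0$, choose $\tilde z^k$ with $\|G(z^k)-\tilde z^k\|\le\gamma_k$ and set $z^{k+1}=\beta_k z^0+(1-\beta_k)z^k-\eta_k\tilde z^k$ with $\beta_k=1/(k+2)$, $\eta_k=(1-\beta_k)/L$. Then $\|G(z^k)\|\le O(k^{-1})+O(\epsilon)$ and $\|z^{k+1}-z^k\|\le O(k^{-1})+O(\epsilon)$ for $k\ge0$; that is, there exist constants $C_1,C_2>0$ independent of $k$ and $\epsilon$ such that $\|G(z^k)\|\le C_1/(k+1)+C_2\epsilon$ and $\|z^{k+1}-z^k\|\le C_1/(k+1)+C_2\epsilon$ for all $k\ge0$.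
   Context: A map $G:\mathbb{Z}\to\mathbb{Z}$ is $c$-co-coercive if $\langle G(x_1)-G(x_2),x_1-x_2\rangle\ge c\|G(x_1)-G(x_2)\|^2$ for all $x_1,x_2$. *)

theory Defs
  imports "HOL-Analysis.Analysis"
begin

definition co_coercive :: "real \<Rightarrow> ('a::real_inner \<Rightarrow> 'a) \<Rightarrow> bool" where
  "co_coercive c G \<longleftrightarrow>
     (\<forall>x1 x2. inner (G x1 - G x2) (x1 - x2) \<ge> c * (norm (G x1 - G x2))\<^sup>2)"

end

theory Submission
  imports Defs
begin

lemma alg:
  fixes n X Y bu bd ab aa au ad bb dd :: real
  assumes n: "n > 0" and e1: "(n+1) * X = n*(bu - ab + bd)" and e2: "(n+1) * Y = n*(au - aa + ad)"
  shows "n * au + (n-1)*n/2 * aa + n*(n+1)/2*dd + n * ad - ((n+1) * X + n*(n+1)/2 * bb)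
     = n*(n+1)*((X - Y - bu + au) - (bb - 2*ab + aa)) + n*(n+1)/2 * (aa + dd + bb + 2*ad - 2*ab - 2*bd)"
proof -
  have "n*(n+1)*((X - Y - bu + au) - (bb - 2*ab + aa)) = n*((n+1)*X) - n*((n+1)*Y) + n*(n+1)*(- bu + au - (bb - 2*ab + aa))"
    by (simp add: algebra_simps)
  also have "\<dots> = n*(n*(bu - ab + bd)) - n*(n*(au - aa + ad)) + n*(n+1)*(- bu + au - (bb - 2*ab + aa))"
    using e1 e2 by simp
  finally have h: "n*(n+1)*((X - Y - bu + au) - (bb - 2*ab + aa)) = n*(n*(bu - ab + bd)) - n*(n*(au - aa + ad)) + n*(n+1)*(- bu + au - (bb - 2*ab + aa))" .
  show ?thesis unfolding h e1 by (simp add: field_simps)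
qed

lemma step_ineq:
  fixes a b u d u' :: "'a::real_inner" and n :: real
  assumes n: "n > 0" and u': "u' = (n/(n+1)) *\<^sub>R (u - a + d)"
    and coco: "inner (b - a) (u' - u) \<ge> (norm (b - a))\<^sup>2"
  shows "(n+1) * inner b u' + n*(n+1)/2 * (norm b)\<^sup>2 \<le> n * inner a u + (n-1)*n/2 * (norm a)\<^sup>2 + n*(n+1)/2*(norm d)\<^sup>2 + n * inner a d"
proof -
  have Q: "0 \<le> n*(n+1)/2 * (norm (a+d-b))\<^sup>2" using n by simp
  have S: "0 \<le> n*(n+1)*(inner (b-a) (u'-u) - (norm (b-a))\<^sup>2)" using n coco by simp
  have e1: "(n+1) * inner b u' = n*(inner b u - inner b a + inner b d)"
  proof -
    have "inner b u' = n/(n+1) * inner b (u - a + d)" by (simp add: u')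
    hence "(n+1) * inner b u' = n * inner b (u - a + d)" using n by simp
    thus ?thesis by (simp add: inner_simps)
  qed
  have e2: "(n+1) * inner a u' = n*(inner a u - inner a a + inner a d)"
  proof -
    have "inner a u' = n/(n+1) * inner a (u - a + d)" by (simp add: u')
    hence "(n+1) * inner a u' = n * inner a (u - a + d)" using n by simp
    thus ?thesis by (simp add: inner_simps)
  qed
  have i1: "inner (b-a) (u'-u) = inner b u' - inner a u' - inner b u + inner a u"
    by (simp add: inner_simps)
  have i2: "(norm (b-a))\<^sup>2 = inner b b - 2 * inner a b + inner a a"
    by (simp add: power2_norm_eq_inner inner_simps inner_commute)
  have i3: "(norm (a+d-b))\<^sup>2 = inner a a + inner d d + inner b b + 2*inner a d - 2 * inner a b - 2*inner b d"
    by (simp add: power2_norm_eq_inner inner_simps inner_commute)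
  have i4: "(norm a)\<^sup>2 = inner a a" "(norm b)\<^sup>2 = inner b b" "(norm d)\<^sup>2 = inner d d"
    by (simp_all add: power2_norm_eq_inner)
  have ba: "inner b a = inner a b" by (simp add: inner_commute)
  have eq: "n * inner a u + (n-1)*n/2 * (norm a)\<^sup>2 + n*(n+1)/2*(norm d)\<^sup>2 + n * inner a d
     - ((n+1) * inner b u' + n*(n+1)/2 * (norm b)\<^sup>2)
     = n*(n+1)*(inner (b-a) (u'-u) - (norm (b-a))\<^sup>2) + n*(n+1)/2 * (norm (a+d-b))\<^sup>2"
    unfolding i1 i2 i3 i4 by (rule alg[OF n e1[unfolded ba] e2])
  show ?thesis using Q S eq by linarith
qed

lemma affine_aux: fixes z0 w :: "'a::real_vector" shows "c *\<^sub>R z0 + (1 - c) *\<^sub>R w - z0 = (1 - c) *\<^sub>R (w - z0)"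
  by (simp add: algebra_simps)

lemma main_bound:
  fixes F :: "'a::real_inner \<Rightarrow> 'a" and z d :: "nat \<Rightarrow> 'a" and eta :: real
  assumes coco: "\<And>x y. inner (F x - F y) (x - y) \<ge> (norm (F x - F y))\<^sup>2"
    and zs: "F zs = 0" and eta: "eta \<ge> 0" and z0: "z 0 = z0"
    and dk: "\<And>k. norm (d k) \<le> eta / sqrt (real k + 1)"
    and rec: "\<And>k. z (Suc k) = (1/(real k+2)) *\<^sub>R z0 + (1 - 1/(real k+2)) *\<^sub>R (z k - F (z k) + d k)"
  shows "norm (F (z k)) \<le> (2*norm(z0 - zs)+1)/(real k+1) + 2*eta \<and>
         norm (z (Suc k) - z k) \<le> 2*(2*norm(z0-zs)+1)/(real k+1) + 6*eta"
proof -
  define D where "D = norm (z0 - zs)"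
  define A where "A = 2*D+1"
  have D0: "D \<ge> 0" unfolding D_def by simp
  have A0: "A \<ge> 1" unfolding A_def using D0 by simp
  define Phi where "Phi k = (real k+1) * inner (F (z k)) (z k - z0) + real k*(real k+1)/2 * (norm (F (z k)))\<^sup>2" for k
  have dk': "norm (d k) \<le> eta" for k
  proof -
    have s1: "sqrt (real k+1) \<ge> 1" by simp
    have "eta / sqrt (real k + 1) \<le> eta / 1"
      using s1 eta by (intro divide_left_mono) auto
    thus ?thesis using dk[of k] by simp
  qed
  have dk2: "(norm (d k))\<^sup>2 \<le> eta\<^sup>2/(real k+1)" for k
  proof -
    have "(norm (d k))\<^sup>2 \<le> (eta / sqrt (real k + 1))\<^sup>2" using dk[of k] by (intro power_mono) auto
    also have "\<dots> = eta\<^sup>2/(real k+1)" by (simp add: power_divide)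
    finally show ?thesis .
  qed
  have uk: "z (Suc k) - z0 = ((real k+1)/(real k+1+1)) *\<^sub>R (z k - z0 - F (z k) + d k)" for k
  proof -
    have c: "1 - 1/(real k+2) = (real k+1)/(real k+1+1)" by (simp add: field_simps)
    have "z (Suc k) - z0 = (1 - 1/(real k+2)) *\<^sub>R ((z k - F (z k) + d k) - z0)"
      unfolding rec by (rule affine_aux)
    also have "\<dots> = ((real k+1)/(real k+1+1)) *\<^sub>R (z k - z0 - F (z k) + d k)"
      unfolding c by (simp add: algebra_simps)
    finally show ?thesis .
  qed
  have step: "Phi (Suc k) \<le> Phi k + (real k+2)/2 * eta\<^sup>2 + (real k+1)*eta*norm (F (z k))" for k
  proof -
    define n where "n = real k + 1"
    have n0: "n > 0" unfolding n_def by simp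
    have dd: "(z (Suc k) - z0) - (z k - z0) = z (Suc k) - z k" by simp
    have si: "(n+1) * inner (F (z (Suc k))) (z (Suc k) - z0) + n*(n+1)/2 * (norm (F (z (Suc k))))\<^sup>2
       \<le> n * inner (F (z k)) (z k - z0) + (n-1)*n/2*(norm (F (z k)))\<^sup>2 + n*(n+1)/2*(norm (d k))\<^sup>2 + n * inner (F (z k)) (d k)"
      apply (rule step_ineq[OF n0])
      using uk[of k] apply (simp add: n_def algebra_simps)
      unfolding dd by (rule coco)
    have t1: "n*(n+1)/2*(norm (d k))\<^sup>2 \<le> (real k+2)/2*eta\<^sup>2"
    proof -
      have "n*(n+1)/2*(norm (d k))\<^sup>2 \<le> n*(n+1)/2*(eta\<^sup>2/n)"
        using dk2[of k] n0 unfolding n_def[symmetric] by (intro mult_left_mono) auto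
      also have "\<dots> = (real k+2)/2*eta\<^sup>2" using n0 by (simp add: n_def field_simps)
      finally show ?thesis .
    qed
    have t2: "n * inner (F (z k)) (d k) \<le> n*eta*norm(F(z k))"
    proof -
      have "inner (F (z k)) (d k) \<le> norm (F (z k)) * norm (d k)" by (rule norm_cauchy_schwarz)
      also have "\<dots> \<le> norm (F (z k)) * eta" using dk'[of k] by (intro mult_left_mono) auto
      finally show ?thesis using n0 by (simp add: mult_left_mono algebra_simps)
    qed
    have "Phi (Suc k) = (n+1) * inner (F (z (Suc k))) (z (Suc k) - z0) + n*(n+1)/2 * (norm (F (z (Suc k))))\<^sup>2"
      unfolding Phi_def n_def by (simp add: algebra_simps)
    moreover have "Phi k = n * inner (F (z k)) (z k - z0) + (n-1)*n/2*(norm (F (z k)))\<^sup>2"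
      unfolding Phi_def n_def by (simp add: algebra_simps)
    ultimately show ?thesis using si t1 t2 unfolding n_def by linarith
  qed
  have sumb: "Phi k \<le> (\<Sum>j<k. (real j+2)/2*eta\<^sup>2 + (real j+1)*eta*norm (F (z j)))" for k
  proof (induction k)
    case 0
    then show ?case by (simp add: Phi_def z0)
  next
    case (Suc k)
    then show ?case using step[of k] by simp
  qed
  have low: "Phi k \<ge> (real k+1)*(real k+2)/2 * (norm (F (z k)))\<^sup>2 - (real k+1)*D*norm (F (z k))" for k
  proof -
    have c: "inner (F (z k)) (z k - zs) \<ge> (norm (F (z k)))\<^sup>2" using coco[of "z k" zs] zs by simp
    have "inner (F (z k)) (zs - z0) \<ge> - \<bar>inner (F (z k)) (zs - z0)\<bar>" by simp
    moreover have "\<bar>inner (F (z k)) (zs - z0)\<bar> \<le> norm (F (z k)) * D"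
      unfolding D_def using Cauchy_Schwarz_ineq2[of "F (z k)" "zs - z0"] by (simp add: norm_minus_commute)
    ultimately have cs: "inner (F (z k)) (zs - z0) \<ge> - (norm (F (z k)) * D)" by linarith
    have "inner (F (z k)) (z k - z0) = inner (F (z k)) (z k - zs) + inner (F (z k)) (zs - z0)"
      by (simp add: inner_diff_right)
    hence i: "inner (F (z k)) (z k - z0) \<ge> (norm (F (z k)))\<^sup>2 - norm (F (z k)) * D" using c cs by linarith
    have "(real k+1) * inner (F (z k)) (z k - z0) \<ge> (real k+1) * ((norm (F (z k)))\<^sup>2 - norm (F (z k)) * D)"
      using i by (intro mult_left_mono) auto
    moreover have "(real k+1)*(real k+2)/2 * (norm (F (z k)))\<^sup>2 = (real k+1) * (norm (F (z k)))\<^sup>2 + real k*(real k+1)/2 * (norm (F (z k)))\<^sup>2"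
      by (simp add: field_simps)
    moreover have "(real k+1) * ((norm (F (z k)))\<^sup>2 - norm (F (z k)) * D) = (real k+1) * (norm (F (z k)))\<^sup>2 - (real k+1)*D*norm (F (z k))"
      by (simp add: algebra_simps)
    ultimately show ?thesis unfolding Phi_def by linarith
  qed
  have sumclosed: "(\<Sum>j<k. (real j+2)/2*eta\<^sup>2 + eta*(A + 2*eta*(real j+1))) \<le> 3/2*eta\<^sup>2*(real k+1)\<^sup>2 + A*eta*(real k+1)" for k
  proof (induction k)
    case 0
    then show ?case using eta A0 by simp
  next
    case (Suc k)
    have p: "0 \<le> eta\<^sup>2*(real k/2 + 3/2)" by simp
    have e: "(3/2*eta\<^sup>2*(real (Suc k)+1)\<^sup>2 + A*eta*(real (Suc k)+1))
      - ((real k+2)/2*eta\<^sup>2 + eta*(A + 2*eta*(real k+1)) + (3/2*eta\<^sup>2*(real k+1)\<^sup>2 + A*eta*(real k+1)))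
      = eta\<^sup>2*(real k/2 + 3/2)"
      by (simp add: field_simps power2_eq_square)
    have "(\<Sum>j<Suc k. (real j+2)/2*eta\<^sup>2 + eta*(A + 2*eta*(real j+1)))
       = (\<Sum>j<k. (real j+2)/2*eta\<^sup>2 + eta*(A + 2*eta*(real j+1))) + ((real k+2)/2*eta\<^sup>2 + eta*(A + 2*eta*(real k+1)))"
      by simp
    then show ?case using Suc p e by linarith
  qed
  have Fb: "(real k+1)*norm (F (z k)) \<le> A + 2*eta*(real k+1)" for k
  proof (induction k rule: less_induct)
    case (less k)
    define m where "m = real k + 1"
    define x where "x = m * norm (F (z k))"
    have m1: "m \<ge> 1" unfolding m_def by simp
    have "(\<Sum>j<k. (real j+2)/2*eta\<^sup>2 + (real j+1)*eta*norm (F (z j))) \<le> (\<Sum>j<k. (real j+2)/2*eta\<^sup>2 + eta*(A + 2*eta*(real j+1)))"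
    proof (rule sum_mono)
      fix j assume "j \<in> {..<k}"
      hence "(real j+1)*norm (F (z j)) \<le> A + 2*eta*(real j+1)" using less by simp
      hence "eta * ((real j+1)*norm (F (z j))) \<le> eta * (A + 2*eta*(real j+1))" using eta by (rule mult_left_mono)
      thus "(real j+2)/2*eta\<^sup>2 + (real j+1)*eta*norm (F (z j)) \<le> (real j+2)/2*eta\<^sup>2 + eta*(A + 2*eta*(real j+1))"
        by (simp add: algebra_simps)
    qed
    hence up: "Phi k \<le> 3/2*eta\<^sup>2*m\<^sup>2 + A*eta*m" using sumb[of k] sumclosed[of k] unfolding m_def by linarith
    have "(real k+1)*(real k+2)/2 * (norm (F (z k)))\<^sup>2 \<ge> x\<^sup>2/2"
    proof -
      have "m*m/2 * (norm (F (z k)))\<^sup>2 \<le> m*(m+1)/2 * (norm (F (z k)))\<^sup>2"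
        using m1 by (intro mult_right_mono) (auto simp: field_simps)
      thus ?thesis unfolding x_def m_def by (simp add: power2_eq_square algebra_simps)
    qed
    with low[of k] have lo: "Phi k \<ge> x\<^sup>2/2 - D*x" unfolding x_def m_def by (simp add: algebra_simps)
    have key: "x\<^sup>2 - 2*D*x \<le> 3*eta\<^sup>2*m\<^sup>2 + 2*A*eta*m" using up lo by linarith
    show ?case
    proof (rule ccontr)
      assume "\<not> ?case"
      hence xg: "x > A + 2*eta*m" unfolding x_def m_def by simp
      define y where "y = D + 1 + 2*eta*m"
      have em: "eta*m \<ge> 0" using eta m1 by simp
      have y0: "y \<ge> 0" unfolding y_def using D0 em by simp
      have "x - D > y" using xg unfolding y_def A_def by simp
      hence "(x - D)\<^sup>2 > y\<^sup>2" using y0 by (intro power_strict_mono) auto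
      hence "x\<^sup>2 - 2*D*x + D\<^sup>2 > (D+1)\<^sup>2 + 4*(D+1)*(eta*m) + 4*(eta*m)\<^sup>2"
        unfolding y_def by (simp add: power2_eq_square algebra_simps)
      moreover have "(eta*m)\<^sup>2 = eta\<^sup>2*m\<^sup>2" by (simp add: power_mult_distrib)
      moreover have "D*(eta*m) \<ge> 0" using D0 em by simp
      moreover have "0 \<le> eta*(eta*(m*m))" using eta m1 by simp
      ultimately show False using key em D0 unfolding A_def by (simp add: power2_eq_square algebra_simps)
    qed
  qed
  have ub: "norm (z k - z0) \<le> A + 3*eta*real k" for k
  proof (induction k)
    case 0
    then show ?case using z0 A0 by simp
  next
    case (Suc k)
    define n where "n = real k + 1"
    have n0: "n > 0" unfolding n_def by simp
    have "norm (z (Suc k) - z0) = (n/(n+1)) * norm (z k - z0 - F (z k) + d k)"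
      unfolding uk n_def using n0 by (simp add: n_def)
    also have "\<dots> \<le> (n/(n+1)) * (norm (z k - z0) + norm (F (z k)) + norm (d k))"
    proof (rule mult_left_mono)
      have "norm (z k - z0 - F (z k) + d k) \<le> norm (z k - z0 - F (z k)) + norm (d k)" by (rule norm_triangle_ineq)
      moreover have "norm (z k - z0 - F (z k)) \<le> norm (z k - z0) + norm (F (z k))" by (rule norm_triangle_ineq4)
      ultimately show "norm (z k - z0 - F (z k) + d k) \<le> norm (z k - z0) + norm (F (z k)) + norm (d k)" by linarith
    qed (use n0 in auto)
    also have "\<dots> \<le> (n/(n+1)) * (A + 3*eta*real k + (A + 2*eta*n)/n + eta)"
    proof -
      have "norm (F (z k)) \<le> (A + 2*eta*n)/n" using Fb[of k] n0 unfolding n_def[symmetric] by (simp add: field_simps)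
      thus ?thesis using Suc dk'[of k] n0 by (intro mult_left_mono) auto
    qed
    also have "\<dots> = (n*(A + 3*eta*real k) + A + 2*eta*n + eta*n)/(n+1)"
    proof -
      have q: "n*((A+2*eta*n)/n) = A+2*eta*n" using n0 by simp
      have "n*(A + 3*eta*real k + (A + 2*eta*n)/n + eta) = n*(A + 3*eta*real k) + A + 2*eta*n + eta*n"
        unfolding distrib_left q by (simp add: algebra_simps)
      thus ?thesis by (metis times_divide_eq_left)
    qed
    also have "\<dots> \<le> A + 3*eta*real (Suc k)"
    proof -
      have "n*(A + 3*eta*real k) + A + 2*eta*n + eta*n \<le> (n+1)*(A + 3*eta*real (Suc k))"
        using eta n0 unfolding n_def by (simp add: algebra_simps)
      thus ?thesis using n0 by (simp add: divide_le_eq algebra_simps)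
    qed
    finally show ?case .
  qed
  define n where "n = real k + 1"
  have n0: "n > 0" unfolding n_def by simp
  have F1: "norm (F (z k)) \<le> A/n + 2*eta"
    using Fb[of k] n0 unfolding n_def[symmetric] by (simp add: field_simps)
  have diff: "z (Suc k) - z k = (n/(n+1)) *\<^sub>R (d k - F (z k)) - (1/(n+1)) *\<^sub>R (z k - z0)"
  proof -
    have "z (Suc k) - z k = (z (Suc k) - z0) - (z k - z0)" by simp
    also have "\<dots> = (n/(n+1)) *\<^sub>R (z k - z0 - F (z k) + d k) - (z k - z0)"
      unfolding uk n_def by simp
    also have "\<dots> = (n/(n+1)) *\<^sub>R (d k - F (z k)) - (1 - n/(n+1)) *\<^sub>R (z k - z0)"
      by (simp add: algebra_simps)
    also have "1 - n/(n+1) = 1/(n+1)" using n0 by (simp add: field_simps)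
    finally show ?thesis .
  qed
  have "norm (z (Suc k) - z k) \<le> (n/(n+1)) * norm (d k - F (z k)) + (1/(n+1)) * norm (z k - z0)"
  proof -
    have "norm (z (Suc k) - z k) \<le> norm ((n/(n+1)) *\<^sub>R (d k - F (z k))) + norm ((1/(n+1)) *\<^sub>R (z k - z0))"
      unfolding diff by (rule norm_triangle_ineq4)
    moreover have "norm ((n/(n+1)) *\<^sub>R (d k - F (z k))) = (n/(n+1)) * norm (d k - F (z k))"
      using n0 by simp
    moreover have "norm ((1/(n+1)) *\<^sub>R (z k - z0)) = (1/(n+1)) * norm (z k - z0)"
      using n0 by simp
    ultimately show ?thesis by linarith
  qed
  also have "\<dots> \<le> 1 * (eta + (A/n + 2*eta)) + (1/(n+1)) * (A + 3*eta*n)"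
  proof (intro add_mono mult_mono)
    show "n/(n+1) \<le> 1" using n0 by simp
    show "norm (d k - F (z k)) \<le> eta + (A/n + 2*eta)"
      using dk'[of k] F1 norm_triangle_ineq4[of "d k" "F (z k)"] by linarith
    show "norm (z k - z0) \<le> A + 3*eta*n" using ub[of k] eta unfolding n_def by (simp add: algebra_simps)
  qed (use n0 eta in auto)
  also have "\<dots> \<le> 2*A/n + 6*eta"
  proof -
    have "(1/(n+1)) * (A + 3*eta*n) = A/(n+1) + 3*eta*(n/(n+1))" by (simp add: add_divide_distrib)
    moreover have "A/(n+1) \<le> A/n" using n0 A0 by (intro divide_left_mono) auto
    moreover have "3*eta*(n/(n+1)) \<le> 3*eta" using n0 eta by (intro mult_left_le) auto
    ultimately show ?thesis by simp
  qed
  finally show ?thesis using F1 unfolding n_def A_def D_def by simp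
qed

theorem corollary2:
  fixes G :: "'a::euclidean_space \<Rightarrow> 'a" and L :: real and zstar z0 :: 'a
  assumes L: "L > 0"
    and coco: "co_coercive (1 / L) G"
    and zero: "G zstar = 0"
  shows "\<exists>C1 C2. C1 > 0 \<and> C2 > 0 \<and>
    (\<forall>(\<epsilon>::real) (z :: nat \<Rightarrow> 'a) (zt :: nat \<Rightarrow> 'a).
       0 < \<epsilon> \<and> \<epsilon> \<le> 1 \<and> z 0 = z0 \<and>
       (\<forall>k. norm (G (z k) - zt k) \<le> \<epsilon> / sqrt (real k + 1)) \<and>
       (\<forall>k. z (Suc k) = (1 / (real k + 2)) *\<^sub>R z0 + (1 - 1 / (real k + 2)) *\<^sub>R z k
                        - ((1 - 1 / (real k + 2)) / L) *\<^sub>R zt k)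
       \<longrightarrow> (\<forall>k. norm (G (z k)) \<le> C1 / (real k + 1) + C2 * \<epsilon> \<and>
                norm (z (Suc k) - z k) \<le> C1 / (real k + 1) + C2 * \<epsilon>))"
proof -
  define A where "A = 2*norm(z0 - zstar)+1"
  have A0: "A > 0" unfolding A_def by (simp add: add_nonneg_pos)
  show ?thesis
  proof (intro exI conjI allI impI)
    show "(L+2)*A > 0" using L A0 by simp
    show "2 + 6/L > 0" using L by (simp add: add_pos_pos)
    fix \<epsilon> :: real and z zt :: "nat \<Rightarrow> 'a" and k :: nat
    assume H: "0 < \<epsilon> \<and> \<epsilon> \<le> 1 \<and> z 0 = z0 \<and>
       (\<forall>k. norm (G (z k) - zt k) \<le> \<epsilon> / sqrt (real k + 1)) \<and>
       (\<forall>k. z (Suc k) = (1 / (real k + 2)) *\<^sub>R z0 + (1 - 1 / (real k + 2)) *\<^sub>R z k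
                        - ((1 - 1 / (real k + 2)) / L) *\<^sub>R zt k)"
    define F where "F x = (1/L) *\<^sub>R G x" for x
    define d where "d k = (1/L) *\<^sub>R (G (z k) - zt k)" for k
    have cocoF: "inner (F x - F y) (x - y) \<ge> (norm (F x - F y))\<^sup>2" for x y
    proof -
      have c: "inner (G x - G y) (x - y) \<ge> (1/L) * (norm (G x - G y))\<^sup>2"
        using coco unfolding co_coercive_def by blast
      have "F x - F y = (1/L) *\<^sub>R (G x - G y)" unfolding F_def by (simp add: algebra_simps)
      hence e1: "inner (F x - F y) (x - y) = (1/L) * inner (G x - G y) (x - y)"
        and e2: "(norm (F x - F y))\<^sup>2 = (1/L) * ((1/L) * (norm (G x - G y))\<^sup>2)"
        using L by (simp_all add: power2_eq_square)
      show ?thesis unfolding e1 e2 using c L by (intro mult_left_mono) auto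
    qed
    have zsF: "F zstar = 0" unfolding F_def using zero by simp
    have eta: "\<epsilon>/L \<ge> 0" using H L by simp
    have dk: "norm (d k) \<le> (\<epsilon>/L) / sqrt (real k + 1)" for k
    proof -
      have "norm (d k) = norm (G (z k) - zt k) / L" unfolding d_def using L by simp
      also have "\<dots> \<le> (\<epsilon> / sqrt (real k + 1)) / L" using H L by (intro divide_right_mono) auto
      finally show ?thesis by (simp add: mult.commute)
    qed
    have rec: "z (Suc k) = (1/(real k+2)) *\<^sub>R z0 + (1 - 1/(real k+2)) *\<^sub>R (z k - F (z k) + d k)" for k
    proof -
      have "z k - F (z k) + d k = z k - (1/L) *\<^sub>R zt k" unfolding F_def d_def by (simp add: algebra_simps)
      moreover have "(1 - 1/(real k+2)) *\<^sub>R (z k - (1/L) *\<^sub>R zt k) = (1 - 1/(real k+2)) *\<^sub>R z k - ((1 - 1/(real k+2))/L) *\<^sub>R zt k"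
        by (simp add: scaleR_diff_right)
      moreover have "z (Suc k) = (1 / (real k + 2)) *\<^sub>R z0 + (1 - 1 / (real k + 2)) *\<^sub>R z k
                        - ((1 - 1 / (real k + 2)) / L) *\<^sub>R zt k" using H by blast
      ultimately show ?thesis by (metis add_diff_eq)
    qed
    have B: "norm (F (z k)) \<le> A/(real k+1) + 2*(\<epsilon>/L) \<and>
         norm (z (Suc k) - z k) \<le> 2*A/(real k+1) + 6*(\<epsilon>/L)"
      using main_bound[of F zstar "\<epsilon>/L" z z0 d k, OF cocoF zsF eta _ dk rec] H unfolding A_def by simp
    have nG: "norm (G (z k)) = L * norm (F (z k))" unfolding F_def using L by simp
    have "norm (G (z k)) \<le> L * (A/(real k+1) + 2*(\<epsilon>/L))" unfolding nG using B L by simp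
    also have "\<dots> = L*A/(real k+1) + 2*\<epsilon>" using L by (simp add: distrib_left)
    also have "\<dots> \<le> (L+2)*A/(real k+1) + (2 + 6/L)*\<epsilon>"
    proof -
      have "L*A/(real k+1) \<le> (L+2)*A/(real k+1)" using A0 by (intro divide_right_mono) auto
      moreover have "2*\<epsilon> \<le> (2 + 6/L)*\<epsilon>" using H L by (intro mult_right_mono) auto
      ultimately show ?thesis by simp
    qed
    finally show "norm (G (z k)) \<le> (L+2)*A/(real k+1) + (2 + 6/L)*\<epsilon>" .
    have "2*A/(real k+1) \<le> (L+2)*A/(real k+1)" using A0 L by (intro divide_right_mono) auto
    moreover have "6*(\<epsilon>/L) \<le> (2 + 6/L)*\<epsilon>" using H L by (simp add: field_simps)
    ultimately show "norm (z (Suc k) - z k) \<le> (L+2)*A/(real k+1) + (2 + 6/L)*\<epsilon>" using B by linarith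
  qed
qed

end
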